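(* Let $A\subseteq B$ be commutative semirings, $S=A[x_1,\dots,x_n]$, $\rho$ a congruence on $B$, and $T\subseteq S\times S$ non-empty. Then there is a bijection between $Z_\rho(T)(B)/\rho$ and $\mathrm{Hom}_{A\text{-alg}}(S/T^{c},B/\rho)$; in particular $\#\,Z_\rho(T)(B)/\rho=\#\,\mathrm{Hom}_{A\text{-alg}}(S/T^{c},B/\rho)$. In particular, if $\rho=\mathrm{id}_B$, then $\#\,Z_{\mathrm{id}_B}(T)(B)=\#\,\mathrm{Hom}_{A\text{-alg}}(S/T^{c},B)$.
   Context: Semirings are commutative with $0$ and $1\neq0$, $0a=0$; congruences are equivalence relations compatible with $+$ and $\cdot$; $\mathrm{id}_B=\{(b,b)\}$. $T^{c}$ is the congruence on $S$ generated by $T$. $Z_\rho(T)(B)=\{P\in B^n:(f(P),g(P))\in\rho\ \forall(f,g)\in T\}$. For $Y\subseteq B^n$, $Y/\rho=\{(\bar c_1,\dots,\bar c_n):(c_1,\dots,c_n)\in Y\}\subseteq(B/\rho)^n$ where $\bar c$ is the class of $c$ modulo $\rho$. An $A$-semialgebra is a commutative semiring $C$ which is an $A$-semimodule with $a(bc)=(ab)c=b(ac)$; $S/T^{c}$ and $B/\rho$ are $A$-semialgebras via $A\hookrightarrow S\to S/T^{c}$ and $A\hookrightarrow B\to B/\rho$. $\mathrm{Hom}_{A\text{-alg}}(C,D)$ is the set of maps that are semiring homomorphisms (preserving $0,1,+,\cdot$) and $A$-semimodule homomorphisms. *)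

theory Defs
  imports Main "HOL-Library.Poly_Mapping" "HOL-Library.FuncSet"
begin

text \<open>Multivariate polynomials over the ambient semiring 'b: maps from monomials
  (exponent vectors nat =>0 nat) to coefficients.\<close>
type_synonym 'b mpoly = "(nat \<Rightarrow>\<^sub>0 nat) \<Rightarrow>\<^sub>0 'b"

definition subsemiring :: "'b::comm_semiring_1 set \<Rightarrow> bool" where
  "subsemiring A \<longleftrightarrow> 0 \<in> A \<and> 1 \<in> A \<and> (\<forall>x\<in>A. \<forall>y\<in>A. x + y \<in> A \<and> x * y \<in> A)"

text \<open>S = A[x_0,...,x_(n-1)]: coefficients in A, only variables with index < n.\<close>
definition poly_carrier :: "'b::comm_semiring_1 set \<Rightarrow> nat \<Rightarrow> 'b mpoly set" where
  "poly_carrier A n = {p::'b mpoly. \<forall>m::nat \<Rightarrow>\<^sub>0 nat\<in>Poly_Mapping.keys p. Poly_Mapping.lookup p m \<in> A \<and> (\<forall>i\<in>Poly_Mapping.keys m. i < n)}"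

definition const_poly :: "'b::comm_semiring_1 \<Rightarrow> 'b mpoly" where
  "const_poly a = Poly_Mapping.single 0 a"

definition peval :: "'b::comm_semiring_1 list \<Rightarrow> 'b mpoly \<Rightarrow> 'b" where
  "peval P p = (\<Sum>m\<in>Poly_Mapping.keys p. Poly_Mapping.lookup p m * (\<Prod>i\<in>Poly_Mapping.keys m. (P ! i) ^ Poly_Mapping.lookup m i))"

definition is_congruence :: "'a::comm_semiring_1 set \<Rightarrow> ('a \<times> 'a) set \<Rightarrow> bool" where
  "is_congruence C R \<longleftrightarrow> equiv C R \<and>
     (\<forall>(a,b)\<in>R. \<forall>(c,d)\<in>R. (a + c, b + d) \<in> R \<and> (a * c, b * d) \<in> R)"

definition gen_congruence :: "'a::comm_semiring_1 set \<Rightarrow> ('a \<times> 'a) set \<Rightarrow> ('a \<times> 'a) set" where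
  "gen_congruence C T = \<Inter>{R. is_congruence C R \<and> T \<subseteq> R}"

definition zero_set :: "nat \<Rightarrow> ('b::comm_semiring_1 \<times> 'b) set \<Rightarrow> ('b mpoly \<times> 'b mpoly) set \<Rightarrow> 'b list set" where
  "zero_set n \<rho> T = {P. length P = n \<and> (\<forall>(f,g)\<in>T. (peval P f, peval P g) \<in> \<rho>)}"

definition pts_mod :: "'b list set \<Rightarrow> ('b \<times> 'b) set \<Rightarrow> 'b set list set" where
  "pts_mod Y \<rho> = (\<lambda>P. map (\<lambda>c. \<rho> `` {c}) P) ` Y"

definition qadd :: "('a::comm_semiring_1 \<times> 'a) set \<Rightarrow> 'a set \<Rightarrow> 'a set \<Rightarrow> 'a set" where
  "qadd R X Y = R `` {x + y |x y. x \<in> X \<and> y \<in> Y}"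

definition qmul :: "('a::comm_semiring_1 \<times> 'a) set \<Rightarrow> 'a set \<Rightarrow> 'a set \<Rightarrow> 'a set" where
  "qmul R X Y = R `` {x * y |x y. x \<in> X \<and> y \<in> Y}"

definition qsmul :: "('a::comm_semiring_1 \<times> 'a) set \<Rightarrow> 'a \<Rightarrow> 'a set \<Rightarrow> 'a set" where
  "qsmul R c X = R `` {c * x |x. x \<in> X}"

definition alg_hom_quot ::
  "'b::comm_semiring_1 set \<Rightarrow> nat \<Rightarrow> ('b mpoly \<times> 'b mpoly) set \<Rightarrow> ('b \<times> 'b) set
    \<Rightarrow> ('b mpoly set \<Rightarrow> 'b set) set" where
  "alg_hom_quot A n Tc \<rho> = {h.
     h \<in> (poly_carrier A n // Tc) \<rightarrow>\<^sub>E (UNIV // \<rho>) \<and>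
     h (Tc `` {0}) = \<rho> `` {0} \<and> h (Tc `` {1}) = \<rho> `` {1} \<and>
     (\<forall>X\<in>poly_carrier A n // Tc. \<forall>Y\<in>poly_carrier A n // Tc.
        h (qadd Tc X Y) = qadd \<rho> (h X) (h Y) \<and> h (qmul Tc X Y) = qmul \<rho> (h X) (h Y)) \<and>
     (\<forall>a\<in>A. \<forall>X\<in>poly_carrier A n // Tc. h (qsmul Tc (const_poly a) X) = qsmul \<rho> a (h X))}"

definition alg_hom_B ::
  "'b::comm_semiring_1 set \<Rightarrow> nat \<Rightarrow> ('b mpoly \<times> 'b mpoly) set \<Rightarrow> ('b mpoly set \<Rightarrow> 'b) set" where
  "alg_hom_B A n Tc = {h.
     h \<in> (poly_carrier A n // Tc) \<rightarrow>\<^sub>E UNIV \<and>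
     h (Tc `` {0}) = 0 \<and> h (Tc `` {1}) = 1 \<and>
     (\<forall>X\<in>poly_carrier A n // Tc. \<forall>Y\<in>poly_carrier A n // Tc.
        h (qadd Tc X Y) = h X + h Y \<and> h (qmul Tc X Y) = h X * h Y) \<and>
     (\<forall>a\<in>A. \<forall>X\<in>poly_carrier A n // Tc. h (qsmul Tc (const_poly a) X) = a * h X)}"

end

theory Submission
  imports Defs
begin


lemma pm_sum_single:
  fixes p :: "'a \<Rightarrow>\<^sub>0 'c::comm_monoid_add"
  shows "p = (\<Sum>m\<in>Poly_Mapping.keys p. Poly_Mapping.single m (Poly_Mapping.lookup p m))"
proof (rule poly_mapping_eqI)
  fix k
  show "Poly_Mapping.lookup p k = Poly_Mapping.lookup (\<Sum>m\<in>Poly_Mapping.keys p. Poly_Mapping.single m (Poly_Mapping.lookup p m)) k"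
    by (simp add: lookup_sum lookup_single when_def in_keys_iff)
qed

definition mon :: "'b::comm_semiring_1 list \<Rightarrow> (nat \<Rightarrow>\<^sub>0 nat) \<Rightarrow> 'b" where
  "mon P m = (\<Prod>i\<in>Poly_Mapping.keys m. (P ! i) ^ Poly_Mapping.lookup m i)"

lemma mon_superset:
  assumes "finite K" "Poly_Mapping.keys m \<subseteq> K"
  shows "mon P m = (\<Prod>i\<in>K. (P ! i) ^ Poly_Mapping.lookup m i)"
  unfolding mon_def
  by (rule prod.mono_neutral_left) (use assms in \<open>auto simp: in_keys_iff\<close>)

lemma mon_add: "mon P (a + b) = mon P a * mon P b"
proof -
  let ?K = "Poly_Mapping.keys a \<union> Poly_Mapping.keys b"
  have "mon P (a+b) = (\<Prod>i\<in>?K. (P ! i) ^ Poly_Mapping.lookup (a+b) i)"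
    by (rule mon_superset) (auto dest: keys_add[THEN subsetD])
  also have "\<dots> = (\<Prod>i\<in>?K. (P ! i) ^ Poly_Mapping.lookup a i * (P ! i) ^ Poly_Mapping.lookup b i)"
    by (simp add: lookup_add power_add)
  also have "\<dots> = mon P a * mon P b"
    by (simp add: prod.distrib mon_superset[of ?K])
  finally show ?thesis .
qed

lemma mon_zero[simp]: "mon P 0 = 1" by (simp add: mon_def)

lemma mon_single1[simp]: "mon P (Poly_Mapping.single i 1) = P ! i"
  by (simp add: mon_def)

lemma peval_mon: "peval P p = (\<Sum>m\<in>Poly_Mapping.keys p. Poly_Mapping.lookup p m * mon P m)"
  by (simp add: peval_def mon_def)

lemma peval_superset:
  assumes "finite K" "Poly_Mapping.keys p \<subseteq> K"
  shows "peval P p = (\<Sum>m\<in>K. Poly_Mapping.lookup p m * mon P m)"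
  unfolding peval_mon
  by (rule sum.mono_neutral_left) (use assms in \<open>auto simp: in_keys_iff\<close>)

lemma peval_add: "peval P (p + q) = peval P p + peval P q"
proof -
  let ?K = "Poly_Mapping.keys p \<union> Poly_Mapping.keys q"
  have "peval P (p+q) = (\<Sum>m\<in>?K. Poly_Mapping.lookup (p+q) m * mon P m)"
    by (rule peval_superset) (auto dest: keys_add[THEN subsetD])
  also have "\<dots> = (\<Sum>m\<in>?K. Poly_Mapping.lookup p m * mon P m + Poly_Mapping.lookup q m * mon P m)"
    by (simp add: lookup_add distrib_right)
  also have "\<dots> = peval P p + peval P q"
    by (simp add: sum.distrib peval_superset[of ?K])
  finally show ?thesis .
qed

lemma peval_zero[simp]: "peval P 0 = 0" by (simp add: peval_def)

lemma peval_sum: "peval P (sum f I) = (\<Sum>i\<in>I. peval P (f i))"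
  by (induction I rule: infinite_finite_induct) (auto simp: peval_add)

lemma peval_single[simp]: "peval P (Poly_Mapping.single m c) = c * mon P m"
  by (simp add: peval_mon)

lemma peval_mult: "peval P (p * q) = peval P p * peval P q"
proof -
  let ?sp = "\<lambda>m. Poly_Mapping.single m (Poly_Mapping.lookup p m)"
  let ?sq = "\<lambda>m. Poly_Mapping.single m (Poly_Mapping.lookup q m)"
  have "p * q = (\<Sum>a\<in>Poly_Mapping.keys p. ?sp a) * (\<Sum>b\<in>Poly_Mapping.keys q. ?sq b)"
    using pm_sum_single[of p] pm_sum_single[of q] by simp
  also have "\<dots> = (\<Sum>a\<in>Poly_Mapping.keys p. \<Sum>b\<in>Poly_Mapping.keys q. ?sp a * ?sq b)"
    by (simp add: sum_distrib_left sum_distrib_right sum.swap[of _ "Poly_Mapping.keys q"])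
  finally have "peval P (p*q) = (\<Sum>a\<in>Poly_Mapping.keys p. \<Sum>b\<in>Poly_Mapping.keys q. peval P (?sp a * ?sq b))"
    by (simp add: peval_sum)
  also have "\<dots> = (\<Sum>a\<in>Poly_Mapping.keys p. \<Sum>b\<in>Poly_Mapping.keys q. (Poly_Mapping.lookup p a * mon P a) * (Poly_Mapping.lookup q b * mon P b))"
    by (simp add: mult_single mon_add ac_simps)
  also have "\<dots> = peval P p * peval P q"
    by (simp add: peval_mon sum_distrib_left sum_distrib_right sum.swap[of _ "Poly_Mapping.keys q"])
  finally show ?thesis .
qed

lemma peval_one[simp]: "peval P 1 = 1"
  by (metis mon_zero mult_1 peval_single single_one)

lemma peval_const[simp]: "peval P (const_poly a) = a"
  by (simp add: const_poly_def)



lemma subsemiring_sum: "subsemiring A \<Longrightarrow> (\<And>i. i \<in> I \<Longrightarrow> f i \<in> A) \<Longrightarrow> sum f I \<in> A"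
  by (induction I rule: infinite_finite_induct) (auto simp: subsemiring_def)

lemma carrier_iff:
  assumes "subsemiring A"
  shows "p \<in> poly_carrier A n \<longleftrightarrow> (\<forall>m. Poly_Mapping.lookup p m \<in> A) \<and> (\<forall>m\<in>Poly_Mapping.keys p. \<forall>i\<in>Poly_Mapping.keys m. i < n)"
proof -
  have "0 \<in> A" using assms by (simp add: subsemiring_def)
  then show ?thesis unfolding poly_carrier_def
    by (auto simp: in_keys_iff)
qed

lemma single_in:
  assumes "subsemiring A" "c \<in> A" "\<forall>i\<in>Poly_Mapping.keys m. i < n"
  shows "Poly_Mapping.single m c \<in> poly_carrier A n"
  using assms by (auto simp: carrier_iff lookup_single when_def subsemiring_def)

lemma zero_in: "subsemiring A \<Longrightarrow> 0 \<in> poly_carrier A n"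
  by (simp add: poly_carrier_def)

lemma add_in:
  assumes "subsemiring A" "p \<in> poly_carrier A n" "q \<in> poly_carrier A n"
  shows "p + q \<in> poly_carrier A n"
  using assms keys_add[of p q] by (auto simp: carrier_iff lookup_add subsemiring_def)

lemma sum_in:
  assumes "subsemiring A" "\<And>i. i \<in> I \<Longrightarrow> f i \<in> poly_carrier A n"
  shows "sum f I \<in> poly_carrier A n"
  using assms by (induction I rule: infinite_finite_induct) (auto simp: zero_in add_in)

lemma mult_in:
  assumes A: "subsemiring A" and p: "p \<in> poly_carrier A n" and q: "q \<in> poly_carrier A n"
  shows "p * q \<in> poly_carrier A n"
proof -
  let ?sp = "\<lambda>m. Poly_Mapping.single m (Poly_Mapping.lookup p m)"
  let ?sq = "\<lambda>m. Poly_Mapping.single m (Poly_Mapping.lookup q m)"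
  have "p * q = (\<Sum>a\<in>Poly_Mapping.keys p. ?sp a) * (\<Sum>b\<in>Poly_Mapping.keys q. ?sq b)"
    using pm_sum_single[of p] pm_sum_single[of q] by simp
  also have "\<dots> = (\<Sum>a\<in>Poly_Mapping.keys p. \<Sum>b\<in>Poly_Mapping.keys q. ?sp a * ?sq b)"
    by (simp add: sum_distrib_left sum_distrib_right sum.swap[of _ "Poly_Mapping.keys q"])
  also have "\<dots> \<in> poly_carrier A n"
  proof (intro sum_in[OF A])
    fix a b assume a: "a \<in> Poly_Mapping.keys p" and b: "b \<in> Poly_Mapping.keys q"
    have "?sp a * ?sq b = Poly_Mapping.single (a+b) (Poly_Mapping.lookup p a * Poly_Mapping.lookup q b)"
      by (simp add: mult_single)
    also have "\<dots> \<in> poly_carrier A n"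
      using a b p q A keys_add[of a b]
      by (intro single_in) (auto simp: carrier_iff subsemiring_def)
    finally show "?sp a * ?sq b \<in> poly_carrier A n" .
  qed
  finally show ?thesis .
qed

lemma const_in: "subsemiring A \<Longrightarrow> a \<in> A \<Longrightarrow> const_poly a \<in> poly_carrier A n"
  unfolding const_poly_def by (rule single_in) auto

lemma one_in: "subsemiring A \<Longrightarrow> 1 \<in> poly_carrier A n"
  using const_in[of A 1 n] by (simp add: const_poly_def subsemiring_def)

abbreviation Xv :: "nat \<Rightarrow> 'b::comm_semiring_1 mpoly" where
  "Xv i \<equiv> Poly_Mapping.single (Poly_Mapping.single i 1) 1"

lemma Xv_in: "subsemiring A \<Longrightarrow> i < n \<Longrightarrow> Xv i \<in> poly_carrier A n"
  by (rule single_in) (auto simp: subsemiring_def)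

lemma peval_Xv[simp]: "peval P (Xv i) = P ! i" by (simp only: peval_single mon_single1 mult_1)


lemma Cinduct:
  assumes A: "subsemiring A"
    and add: "\<And>f g. f \<in> poly_carrier A n \<Longrightarrow> g \<in> poly_carrier A n \<Longrightarrow> Q f \<Longrightarrow> Q g \<Longrightarrow> Q (f + g)"
    and mul: "\<And>f g. f \<in> poly_carrier A n \<Longrightarrow> g \<in> poly_carrier A n \<Longrightarrow> Q f \<Longrightarrow> Q g \<Longrightarrow> Q (f * g)"
    and cst: "\<And>a. a \<in> A \<Longrightarrow> Q (const_poly a)"
    and var: "\<And>i. i < n \<Longrightarrow> Q (Xv i)"
    and f: "f \<in> poly_carrier A n"
  shows "Q f"
proof -
  have A0: "0 \<in> A" and A1: "1 \<in> A" using A by (auto simp: subsemiring_def)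
  have Q1: "Q 1" using cst[OF A1] by (simp add: const_poly_def)
  have pow: "Q (Poly_Mapping.single (Poly_Mapping.single i k) 1)" if "i < n" for i k
  proof (induction k)
    case 0 then show ?case using Q1 by simp
  next
    case (Suc k)
    have e: "Poly_Mapping.single (Poly_Mapping.single i (Suc k)) (1::'a) = Xv i * Poly_Mapping.single (Poly_Mapping.single i k) 1"
      by (simp add: mult_single single_add[symmetric])
    have "Poly_Mapping.single (Poly_Mapping.single i k) (1::'a) \<in> poly_carrier A n"
      using that A1 by (intro single_in[OF A]) auto
    then show ?case unfolding e by (rule mul[OF Xv_in[OF A that] _ var[OF that] Suc])
  qed
  have monI: "Q (Poly_Mapping.single (\<Sum>i\<in>I. Poly_Mapping.single i (e i)) 1)
     \<and> Poly_Mapping.single (\<Sum>i\<in>I. Poly_Mapping.single i (e i)) 1 \<in> poly_carrier A n"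
    if "finite I" "I \<subseteq> {..<n}" for I e
    using that
  proof (induction I rule: finite_induct)
    case empty then show ?case using Q1 one_in[OF A] by simp
  next
    case (insert x F)
    let ?a = "Poly_Mapping.single (Poly_Mapping.single x (e x)) (1::'a)"
    let ?b = "Poly_Mapping.single (\<Sum>i\<in>F. Poly_Mapping.single i (e i)) (1::'a)"
    have eq: "Poly_Mapping.single (\<Sum>i\<in>insert x F. Poly_Mapping.single i (e i)) 1 = ?a * ?b"
      using insert by (simp add: mult_single)
    have xa: "?a \<in> poly_carrier A n" using insert A1 by (intro single_in[OF A]) auto
    have xn: "x < n" using insert by auto
    have IH: "Q ?b" "?b \<in> poly_carrier A n" using insert by auto
    show ?case unfolding eq using mul[OF xa IH(2) pow[OF xn] IH(1)] mult_in[OF A xa IH(2)] by blast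
  qed
  have mon: "Q (Poly_Mapping.single m 1) \<and> Poly_Mapping.single m 1 \<in> poly_carrier A n"
    if "\<forall>i\<in>Poly_Mapping.keys m. i < n" for m
    using monI[of "Poly_Mapping.keys m" "Poly_Mapping.lookup m"] that pm_sum_single[of m] by auto
  have trm: "Q (Poly_Mapping.single m c) \<and> Poly_Mapping.single m c \<in> poly_carrier A n"
    if "\<forall>i\<in>Poly_Mapping.keys m. i < n" "c \<in> A" for m c
  proof -
    have eq: "Poly_Mapping.single m c = const_poly c * Poly_Mapping.single m 1"
      by (simp add: const_poly_def mult_single)
    have M: "Q (Poly_Mapping.single m 1)" "Poly_Mapping.single m 1 \<in> poly_carrier A n" using mon[OF that(1)] by auto
    show ?thesis unfolding eq using mul[OF const_in[OF A that(2)] M(2) cst[OF that(2)] M(1)]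
      mult_in[OF A const_in[OF A that(2)] M(2)] by blast
  qed
  have sumI: "Q (\<Sum>m\<in>K. Poly_Mapping.single m (Poly_Mapping.lookup f m))
    \<and> (\<Sum>m\<in>K. Poly_Mapping.single m (Poly_Mapping.lookup f m)) \<in> poly_carrier A n"
    if "finite K" "K \<subseteq> Poly_Mapping.keys f" for K
    using that
  proof (induction K rule: finite_induct)
    case empty then show ?case using cst[OF A0] zero_in[OF A] by (simp add: const_poly_def)
  next
    case (insert x F)
    have "Q (Poly_Mapping.single x (Poly_Mapping.lookup f x)) \<and> Poly_Mapping.single x (Poly_Mapping.lookup f x) \<in> poly_carrier A n"
      using insert f by (intro trm) (auto simp: carrier_iff[OF A])
    moreover have "Q (\<Sum>m\<in>F. Poly_Mapping.single m (Poly_Mapping.lookup f m))"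
      "(\<Sum>m\<in>F. Poly_Mapping.single m (Poly_Mapping.lookup f m)) \<in> poly_carrier A n" using insert by auto
    ultimately show ?case using insert(1,2) add add_in[OF A] by (simp add: sum.insert)
  qed
  show ?thesis using sumI[of "Poly_Mapping.keys f"] pm_sum_single[of f] by simp
qed



lemma img_class:
  assumes "equiv C R" "S \<subseteq> R `` {z}" "z \<in> S"
  shows "R `` S = R `` {z}"
proof
  show "R `` S \<subseteq> R `` {z}"
  proof
    fix y assume "y \<in> R `` S"
    then obtain s where s: "s \<in> S" "(s, y) \<in> R" by auto
    then have "(z, s) \<in> R" using assms(2) by auto
    then show "y \<in> R `` {z}" using s assms(1) by (auto elim: equivE transE)
  qed
  show "R `` {z} \<subseteq> R `` S" using assms(3) by auto
qed

lemma cong_mem: "is_congruence C R \<Longrightarrow> (x, y) \<in> R \<Longrightarrow> x \<in> C \<and> y \<in> C"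
  unfolding is_congruence_def equiv_def refl_on_def by auto

lemma cong_refl: "is_congruence C R \<Longrightarrow> x \<in> C \<Longrightarrow> (x, x) \<in> R"
  unfolding is_congruence_def equiv_def refl_on_def by auto

lemma cong_add: "is_congruence C R \<Longrightarrow> (a, b) \<in> R \<Longrightarrow> (c, d) \<in> R \<Longrightarrow> (a + c, b + d) \<in> R"
  unfolding is_congruence_def by blast

lemma cong_mul: "is_congruence C R \<Longrightarrow> (a, b) \<in> R \<Longrightarrow> (c, d) \<in> R \<Longrightarrow> (a * c, b * d) \<in> R"
  unfolding is_congruence_def by blast

lemma cong_equiv: "is_congruence C R \<Longrightarrow> equiv C R"
  unfolding is_congruence_def by blast

lemma cong_qadd:
  assumes R: "is_congruence C R" and x: "x \<in> C" and y: "y \<in> C"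
  shows "qadd R (R `` {x}) (R `` {y}) = R `` {x + y}"
  unfolding qadd_def
proof (rule img_class[OF cong_equiv[OF R]])
  show "{a + b |a b. a \<in> R `` {x} \<and> b \<in> R `` {y}} \<subseteq> R `` {x + y}"
    using cong_add[OF R] by auto
  show "x + y \<in> {a + b |a b. a \<in> R `` {x} \<and> b \<in> R `` {y}}"
    using cong_refl[OF R x] cong_refl[OF R y] by auto
qed

lemma cong_qmul:
  assumes R: "is_congruence C R" and x: "x \<in> C" and y: "y \<in> C"
  shows "qmul R (R `` {x}) (R `` {y}) = R `` {x * y}"
  unfolding qmul_def
proof (rule img_class[OF cong_equiv[OF R]])
  show "{a * b |a b. a \<in> R `` {x} \<and> b \<in> R `` {y}} \<subseteq> R `` {x * y}"
    using cong_mul[OF R] by auto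
  show "x * y \<in> {a * b |a b. a \<in> R `` {x} \<and> b \<in> R `` {y}}"
    using cong_refl[OF R x] cong_refl[OF R y] by auto
qed

lemma cong_qsmul:
  assumes R: "is_congruence C R" and c: "c \<in> C" and x: "x \<in> C"
  shows "qsmul R c (R `` {x}) = R `` {c * x}"
  unfolding qsmul_def
proof (rule img_class[OF cong_equiv[OF R]])
  show "{c * b |b. b \<in> R `` {x}} \<subseteq> R `` {c * x}"
    using cong_mul[OF R cong_refl[OF R c]] by auto
  show "c * x \<in> {c * b |b. b \<in> R `` {x}}"
    using cong_refl[OF R x] by auto
qed

lemma full_cong:
  assumes "\<And>x y. x \<in> C \<Longrightarrow> y \<in> C \<Longrightarrow> x + y \<in> C \<and> x * y \<in> C"
  shows "is_congruence C (C \<times> C)"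
  using assms unfolding is_congruence_def equiv_def refl_on_def sym_def trans_def by auto

lemma gen_cong:
  assumes full: "is_congruence C (C \<times> C)" and T: "T \<subseteq> C \<times> C"
  shows "is_congruence C (gen_congruence C T)"
proof -
  let ?F = "{R. is_congruence C R \<and> T \<subseteq> R}"
  have inF: "C \<times> C \<in> ?F" using full T by simp
  have sub: "\<Inter>?F \<subseteq> C \<times> C" using inF by blast
  have refl: "(x, x) \<in> \<Inter>?F" if "x \<in> C" for x
    using cong_refl that by blast
  have sym: "(y, x) \<in> \<Inter>?F" if "(x, y) \<in> \<Inter>?F" for x y
  proof (rule InterI)
    fix R assume R: "R \<in> ?F"
    then have "(x, y) \<in> R" using that by blast
    then show "(y, x) \<in> R" using R cong_equiv[of C R] unfolding equiv_def sym_def by blast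
  qed
  have trans: "(x, z) \<in> \<Inter>?F" if "(x, y) \<in> \<Inter>?F" "(y, z) \<in> \<Inter>?F" for x y z
  proof (rule InterI)
    fix R assume R: "R \<in> ?F"
    then have "(x, y) \<in> R" "(y, z) \<in> R" using that by blast+
    then show "(x, z) \<in> R" using R cong_equiv[of C R] unfolding equiv_def trans_def by blast
  qed
  have comp: "(a + c, b + d) \<in> \<Inter>?F \<and> (a * c, b * d) \<in> \<Inter>?F"
    if "(a, b) \<in> \<Inter>?F" "(c, d) \<in> \<Inter>?F" for a b c d
  proof (intro conjI InterI)
    fix R assume R: "R \<in> ?F"
    then have "(a, b) \<in> R" "(c, d) \<in> R" using that by blast+
    then show "(a + c, b + d) \<in> R" "(a * c, b * d) \<in> R"
      using R cong_add[of C R] cong_mul[of C R] by blast+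
  qed
  have "equiv C (\<Inter>?F)"
    unfolding equiv_def refl_on_def sym_def trans_def
    using sub refl sym trans by blast
  then show ?thesis unfolding gen_congruence_def is_congruence_def using comp by blast
qed

lemma gen_sub: "T \<subseteq> gen_congruence C T"
  unfolding gen_congruence_def by blast

lemma gen_min: "is_congruence C R \<Longrightarrow> T \<subseteq> R \<Longrightarrow> gen_congruence C T \<subseteq> R"
  unfolding gen_congruence_def by blast



lemma rho_univ_class: "\<rho> `` {c} \<in> UNIV // \<rho>"
  by (rule quotientI) simp

lemma carrier_cong:
  assumes A: "subsemiring A"
  shows "is_congruence (poly_carrier A n) (poly_carrier A n \<times> poly_carrier A n)"
  by (rule full_cong) (simp add: add_in[OF A] mult_in[OF A])

lemma gen_lemma:
  assumes A: "subsemiring A" and rho: "is_congruence UNIV \<rho>"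
    and Tc: "is_congruence (poly_carrier A n) Tc"
    and h: "h \<in> alg_hom_quot A n Tc \<rho>"
    and var: "\<And>i. i < n \<Longrightarrow> h (Tc `` {Xv i}) = \<rho> `` {P ! i}"
    and f: "f \<in> poly_carrier A n"
  shows "h (Tc `` {f}) = \<rho> `` {peval P f}"
  using A
proof (rule Cinduct[where Q = "\<lambda>f. h (Tc `` {f}) = \<rho> `` {peval P f}"])
  let ?C = "poly_carrier A n"
  have cls: "Tc `` {x} \<in> ?C // Tc" if "x \<in> ?C" for x using that by (rule quotientI)
  have hadd: "h (qadd Tc X Y) = qadd \<rho> (h X) (h Y)" and hmul: "h (qmul Tc X Y) = qmul \<rho> (h X) (h Y)"
    if "X \<in> ?C // Tc" "Y \<in> ?C // Tc" for X Y
    using h that unfolding alg_hom_quot_def by blast+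
  have h1: "h (Tc `` {1}) = \<rho> `` {1}" using h unfolding alg_hom_quot_def by blast
  have hsm: "h (qsmul Tc (const_poly a) X) = qsmul \<rho> a (h X)" if "a \<in> A" "X \<in> ?C // Tc" for a X
    using h that unfolding alg_hom_quot_def by blast
  show "h (Tc `` {f + g}) = \<rho> `` {peval P (f + g)}"
    if "f \<in> ?C" "g \<in> ?C" "h (Tc `` {f}) = \<rho> `` {peval P f}" "h (Tc `` {g}) = \<rho> `` {peval P g}" for f g
  proof -
    have "h (Tc `` {f + g}) = h (qadd Tc (Tc `` {f}) (Tc `` {g}))"
      using cong_qadd[OF Tc that(1,2)] by simp
    also have "\<dots> = qadd \<rho> (\<rho> `` {peval P f}) (\<rho> `` {peval P g})"
      using hadd[OF cls cls] that by simp
    also have "\<dots> = \<rho> `` {peval P (f + g)}"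
      using cong_qadd[OF rho] by (simp add: peval_add)
    finally show ?thesis .
  qed
  show "h (Tc `` {f * g}) = \<rho> `` {peval P (f * g)}"
    if "f \<in> ?C" "g \<in> ?C" "h (Tc `` {f}) = \<rho> `` {peval P f}" "h (Tc `` {g}) = \<rho> `` {peval P g}" for f g
  proof -
    have "h (Tc `` {f * g}) = h (qmul Tc (Tc `` {f}) (Tc `` {g}))"
      using cong_qmul[OF Tc that(1,2)] by simp
    also have "\<dots> = qmul \<rho> (\<rho> `` {peval P f}) (\<rho> `` {peval P g})"
      using hmul[OF cls cls] that by simp
    also have "\<dots> = \<rho> `` {peval P (f * g)}"
      using cong_qmul[OF rho] by (simp add: peval_mult)
    finally show ?thesis .
  qed
  show "h (Tc `` {const_poly a}) = \<rho> `` {peval P (const_poly a)}" if "a \<in> A" for a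
  proof -
    have one: "1 \<in> ?C" by (rule one_in[OF A])
    have "h (Tc `` {const_poly a}) = h (qsmul Tc (const_poly a) (Tc `` {1}))"
      using cong_qsmul[OF Tc const_in[OF A that] one] by simp
    also have "\<dots> = qsmul \<rho> a (\<rho> `` {1})"
      using hsm[OF that cls[OF one]] h1 by simp
    also have "\<dots> = \<rho> `` {a}"
      using cong_qsmul[OF rho, of a 1] by simp
    finally show ?thesis by simp
  qed
  show "h (Tc `` {Xv i}) = \<rho> `` {peval P (Xv i)}" if "i < n" for i
    using var[OF that] by (simp only: peval_Xv)
qed (rule f)



lemma part1:
  assumes A: "subsemiring A" and rho: "is_congruence UNIV \<rho>"
    and T: "T \<subseteq> poly_carrier A n \<times> poly_carrier A n"
  shows "\<exists>\<phi>. bij_betw \<phi> (pts_mod (zero_set n \<rho> T) \<rho>)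
                     (alg_hom_quot A n (gen_congruence (poly_carrier A n) T) \<rho>)"
proof -
  define C where "C = poly_carrier A n"
  define Tc where "Tc = gen_congruence C T"
  define H where "H = alg_hom_quot A n Tc \<rho>"
  define Z where "Z = zero_set n \<rho> T"
  have TC: "T \<subseteq> C \<times> C" using T C_def by simp
  have Tcc: "is_congruence C Tc" unfolding Tc_def C_def
    using gen_cong[OF carrier_cong[OF A] T] .
  have TTc: "T \<subseteq> Tc" unfolding Tc_def by (rule gen_sub)
  have cls: "Tc `` {x} \<in> C // Tc" if "x \<in> C" for x using that by (rule quotientI)
  have rhoeq: "equiv UNIV \<rho>" using cong_equiv[OF rho] .
  define \<Psi> where "\<Psi> h = map (\<lambda>i. h (Tc `` {Xv i})) [0..<n]" for h :: "'a mpoly set \<Rightarrow> 'a set"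
  define Pof where "Pof h = map (\<lambda>i. SOME c. h (Tc `` {Xv i}) = \<rho> `` {c}) [0..<n]" for h :: "'a mpoly set \<Rightarrow> 'a set"
  have Pof_len: "length (Pof h) = n" for h by (simp add: Pof_def)
  have Pof_var: "h (Tc `` {Xv i}) = \<rho> `` {Pof h ! i}" if "h \<in> H" "i < n" for h i
  proof -
    have "h (Tc `` {Xv i}) \<in> UNIV // \<rho>"
      using that cls[of "Xv i"] Xv_in[OF A, of i n] unfolding H_def alg_hom_quot_def C_def by blast
    then obtain c where "h (Tc `` {Xv i}) = \<rho> `` {c}" by (auto elim: quotientE)
    then have "h (Tc `` {Xv i}) = \<rho> `` {SOME c. h (Tc `` {Xv i}) = \<rho> `` {c}}"
      by (rule someI)
    then show ?thesis using that by (simp add: Pof_def)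
  qed
  have gen: "h (Tc `` {f}) = \<rho> `` {peval (Pof h) f}" if "h \<in> H" "f \<in> C" for h f
    using gen_lemma[OF A rho Tcc[unfolded C_def] that(1)[unfolded H_def] Pof_var[OF that(1)]] that(2)
    unfolding C_def by blast
  have Psi_Pof: "\<Psi> h = map (\<lambda>c. \<rho> `` {c}) (Pof h)" if "h \<in> H" for h
  proof (rule nth_equalityI)
    show "length (\<Psi> h) = length (map (\<lambda>c. \<rho> `` {c}) (Pof h))" by (simp add: \<Psi>_def Pof_len)
    fix i assume "i < length (\<Psi> h)"
    then have i: "i < n" by (simp add: \<Psi>_def)
    have "\<Psi> h ! i = h (Tc `` {Xv i})" using i by (simp add: \<Psi>_def del: One_nat_def)
    also have "\<dots> = \<rho> `` {Pof h ! i}" by (rule Pof_var[OF that i])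
    finally show "\<Psi> h ! i = map (\<lambda>c. \<rho> `` {c}) (Pof h) ! i" using i Pof_len by simp
  qed
  have inj: "inj_on \<Psi> H"
  proof (rule inj_onI)
    fix h1 h2 assume h1: "h1 \<in> H" and h2: "h2 \<in> H" and eq: "\<Psi> h1 = \<Psi> h2"
    have v: "h2 (Tc `` {Xv i}) = \<rho> `` {Pof h1 ! i}" if "i < n" for i
    proof -
      have "h2 (Tc `` {Xv i}) = \<Psi> h2 ! i" using that by (simp add: \<Psi>_def)
      also have "\<dots> = \<Psi> h1 ! i" using eq by simp
      also have "\<dots> = \<rho> `` {Pof h1 ! i}" using that Pof_var[OF h1 that] by (simp add: \<Psi>_def del: One_nat_def)
      finally show ?thesis .
    qed
    have g2: "h2 (Tc `` {f}) = \<rho> `` {peval (Pof h1) f}" if "f \<in> C" for f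
      using gen_lemma[OF A rho Tcc[unfolded C_def] h2[unfolded H_def] v] that
      unfolding C_def by blast
    show "h1 = h2"
    proof (rule extensionalityI)
      show "h1 \<in> extensional (C // Tc)" "h2 \<in> extensional (C // Tc)"
        using h1 h2 unfolding H_def alg_hom_quot_def C_def by (auto simp: PiE_def)
      fix X assume "X \<in> C // Tc"
      then obtain f where f: "f \<in> C" "X = Tc `` {f}" by (auto elim: quotientE)
      show "h1 X = h2 X" using gen[OF h1 f(1)] g2[OF f(1)] f(2) by simp
    qed
  qed
  have img1: "\<Psi> ` H \<subseteq> pts_mod Z \<rho>"
  proof
    fix y assume "y \<in> \<Psi> ` H"
    then obtain h where h: "h \<in> H" "y = \<Psi> h" by auto
    have "Pof h \<in> Z"
      unfolding Z_def zero_set_def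
    proof (intro CollectI conjI ballI Pof_len, clarify)
      fix f g assume fg: "(f, g) \<in> T"
      then have "f \<in> C" "g \<in> C" "(f, g) \<in> Tc" using TC TTc by auto
      then have "Tc `` {f} = Tc `` {g}" using cong_equiv[OF Tcc] by (simp add: equiv_class_eq)
      then have "\<rho> `` {peval (Pof h) f} = \<rho> `` {peval (Pof h) g}"
        using gen[OF h(1) \<open>f \<in> C\<close>] gen[OF h(1) \<open>g \<in> C\<close>] by simp
      then show "(peval (Pof h) f, peval (Pof h) g) \<in> \<rho>"
        using eq_equiv_class_iff[OF rhoeq] by blast
    qed
    then show "y \<in> pts_mod Z \<rho>" using h Psi_Pof unfolding pts_mod_def by auto
  qed
  have img2: "pts_mod Z \<rho> \<subseteq> \<Psi> ` H"
  proof
    fix y assume "y \<in> pts_mod Z \<rho>"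
    then obtain P where P: "P \<in> Z" "y = map (\<lambda>c. \<rho> `` {c}) P" unfolding pts_mod_def by auto
    have lenP: "length P = n" using P unfolding Z_def zero_set_def by auto
    define K where "K = {(f, g). f \<in> C \<and> g \<in> C \<and> (peval P f, peval P g) \<in> \<rho>}"
    have Kc: "is_congruence C K"
      unfolding is_congruence_def
    proof (intro conjI ballI)
      show "equiv C K"
        using rhoeq unfolding K_def equiv_def refl_on_def sym_def trans_def by blast
      fix p q assume "p \<in> K" "q \<in> K"
      then show "case p of (a, b) \<Rightarrow> \<forall>(c, d)\<in>K. (a + c, b + d) \<in> K \<and> (a * c, b * d) \<in> K"
        unfolding K_def using cong_add[OF rho] cong_mul[OF rho] add_in[OF A] mult_in[OF A]
        by (auto simp: peval_add peval_mult C_def)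
    qed
    have TK: "T \<subseteq> K" using P TC unfolding K_def Z_def zero_set_def by auto
    have TcK: "Tc \<subseteq> K" unfolding Tc_def by (rule gen_min[OF Kc TK])
    define hP where "hP = restrict (\<lambda>X. \<rho> `` {peval P (SOME f. f \<in> X)}) (C // Tc)"
    have hPv: "hP (Tc `` {f}) = \<rho> `` {peval P f}" if "f \<in> C" for f
    proof -
      have "f \<in> Tc `` {f}" using cong_refl[OF Tcc that] by simp
      then have "(SOME f'. f' \<in> Tc `` {f}) \<in> Tc `` {f}" by (rule someI)
      then have "(f, SOME f'. f' \<in> Tc `` {f}) \<in> K" using TcK by auto
      then have "(peval P f, peval P (SOME f'. f' \<in> Tc `` {f})) \<in> \<rho>" unfolding K_def by auto
      then have "\<rho> `` {peval P (SOME f'. f' \<in> Tc `` {f})} = \<rho> `` {peval P f}"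
        using equiv_class_eq[OF rhoeq] by metis
      then show ?thesis using cls[OF that] by (simp add: hP_def)
    qed
    have zC: "0 \<in> C" and oC: "1 \<in> C" using zero_in[OF A] one_in[OF A] by (auto simp: C_def)
    have hPH: "hP \<in> H"
      unfolding H_def alg_hom_quot_def
    proof (intro CollectI conjI ballI)
      show "hP \<in> poly_carrier A n // Tc \<rightarrow>\<^sub>E UNIV // \<rho>" unfolding hP_def C_def
        using rho_univ_class by auto
      show "hP (Tc `` {0}) = \<rho> `` {0}" using hPv[OF zC] by simp
      show "hP (Tc `` {1}) = \<rho> `` {1}" using hPv[OF oC] by simp
    next
      fix X Y assume "X \<in> poly_carrier A n // Tc" "Y \<in> poly_carrier A n // Tc"
      then obtain f g where f: "f \<in> C" "X = Tc `` {f}" and g: "g \<in> C" "Y = Tc `` {g}"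
        unfolding C_def[symmetric] by (auto elim!: quotientE)
      have fg: "f + g \<in> C" "f * g \<in> C" using f g add_in[OF A] mult_in[OF A] by (auto simp: C_def)
      show "hP (qadd Tc X Y) = qadd \<rho> (hP X) (hP Y)"
        using f g cong_qadd[OF Tcc f(1) g(1)] hPv[OF fg(1)] hPv[OF f(1)] hPv[OF g(1)]
          cong_qadd[OF rho] by (simp add: peval_add)
      show "hP (qmul Tc X Y) = qmul \<rho> (hP X) (hP Y)"
        using f g cong_qmul[OF Tcc f(1) g(1)] hPv[OF fg(2)] hPv[OF f(1)] hPv[OF g(1)]
          cong_qmul[OF rho] by (simp add: peval_mult)
    next
      fix a X assume a: "a \<in> A" and "X \<in> poly_carrier A n // Tc"
      then obtain f where f: "f \<in> C" "X = Tc `` {f}"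
        unfolding C_def[symmetric] by (auto elim!: quotientE)
      have ca: "const_poly a \<in> C" using const_in[OF A a] by (simp add: C_def)
      have cf: "const_poly a * f \<in> C" using mult_in[OF A] ca f by (simp add: C_def)
      show "hP (qsmul Tc (const_poly a) X) = qsmul \<rho> a (hP X)"
        using f cong_qsmul[OF Tcc ca f(1)] hPv[OF cf] hPv[OF f(1)] cong_qsmul[OF rho]
        by (simp add: peval_mult)
    qed
    have "\<Psi> hP = y"
      unfolding P(2)
    proof (rule nth_equalityI)
      show "length (\<Psi> hP) = length (map (\<lambda>c. \<rho> `` {c}) P)" by (simp add: \<Psi>_def lenP)
      fix i assume "i < length (\<Psi> hP)"
      then have i: "i < n" by (simp add: \<Psi>_def)
      have "Xv i \<in> C" using Xv_in[OF A i] by (simp add: C_def)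
      then show "\<Psi> hP ! i = map (\<lambda>c. \<rho> `` {c}) P ! i"
        using i lenP hPv by (simp add: \<Psi>_def del: One_nat_def)
    qed
    then show "y \<in> \<Psi> ` H" using hPH by blast
  qed
  have "bij_betw \<Psi> H (pts_mod Z \<rho>)"
    unfolding bij_betw_def using inj img1 img2 by blast
  then have "bij_betw (inv_into H \<Psi>) (pts_mod Z \<rho>) H" by (rule bij_betw_inv_into)
  then show ?thesis unfolding H_def Z_def Tc_def C_def by blast
qed



lemma Id_cong: "is_congruence UNIV (Id :: ('a::comm_semiring_1 \<times> 'a) set)"
  unfolding is_congruence_def equiv_def refl_on_def sym_def trans_def by auto

lemma Id_quot: "X \<in> UNIV // (Id :: ('a \<times> 'a) set) \<longleftrightarrow> (\<exists>c. X = {c})"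
  unfolding quotient_def by auto

lemma qadd_Id[simp]: "qadd Id {a} {b} = {a + b}" by (simp add: qadd_def)
lemma qmul_Id[simp]: "qmul Id {a} {b} = {a * b}" by (simp add: qmul_def)
lemma qsmul_Id[simp]: "qsmul Id a {b} = {a * b}" by (simp add: qsmul_def)

lemma qclosed:
  assumes A: "subsemiring A" and Tc: "is_congruence (poly_carrier A n) Tc"
    and X: "X \<in> poly_carrier A n // Tc" and Y: "Y \<in> poly_carrier A n // Tc"
  shows "qadd Tc X Y \<in> poly_carrier A n // Tc" "qmul Tc X Y \<in> poly_carrier A n // Tc"
proof -
  obtain f where f: "f \<in> poly_carrier A n" "X = Tc `` {f}" using X by (auto elim: quotientE)
  obtain g where g: "g \<in> poly_carrier A n" "Y = Tc `` {g}" using Y by (auto elim: quotientE)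
  show "qadd Tc X Y \<in> poly_carrier A n // Tc"
    using cong_qadd[OF Tc f(1) g(1)] f g add_in[OF A f(1) g(1)] by (auto intro: quotientI)
  show "qmul Tc X Y \<in> poly_carrier A n // Tc"
    using cong_qmul[OF Tc f(1) g(1)] f g mult_in[OF A f(1) g(1)] by (auto intro: quotientI)
qed

lemma qsclosed:
  assumes A: "subsemiring A" and Tc: "is_congruence (poly_carrier A n) Tc"
    and a: "a \<in> A" and X: "X \<in> poly_carrier A n // Tc"
  shows "qsmul Tc (const_poly a) X \<in> poly_carrier A n // Tc"
proof -
  obtain f where f: "f \<in> poly_carrier A n" "X = Tc `` {f}" using X by (auto elim: quotientE)
  show ?thesis
    using cong_qsmul[OF Tc const_in[OF A a] f(1)] f mult_in[OF A const_in[OF A a] f(1)] by (auto intro: quotientI)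
qed

lemma hom_bij:
  assumes A: "subsemiring A" and Tcc: "is_congruence (poly_carrier A n) Tc"
  shows "\<exists>F. bij_betw F (alg_hom_quot A n Tc Id) (alg_hom_B A n Tc)"
proof -
  let ?Q = "poly_carrier A n // Tc"
  define F where "F h = restrict (\<lambda>X. the_elem (h X)) ?Q" for h :: "'a mpoly set \<Rightarrow> 'a set"
  define G where "G k = restrict (\<lambda>X. {k X}) ?Q" for k :: "'a mpoly set \<Rightarrow> 'a"
  have sing: "h X = {F h X}" if "h \<in> alg_hom_quot A n Tc Id" "X \<in> ?Q" for h X
  proof -
    have "h X \<in> UNIV // Id" using that unfolding alg_hom_quot_def by auto
    then obtain c where "h X = {c}" by (auto simp: Id_quot)
    then show ?thesis using that(2) by (simp add: F_def)
  qed
  have Gv: "G k X = {k X}" if "X \<in> ?Q" for k X using that by (simp add: G_def)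
  have Fv: "F h X = the_elem (h X)" if "X \<in> ?Q" for h X using that by (simp add: F_def)
  show ?thesis
  proof (intro exI bij_betw_byWitness[where f' = G])
    show "\<forall>h\<in>alg_hom_quot A n Tc Id. G (F h) = h"
    proof
      fix h assume h: "h \<in> alg_hom_quot A n Tc Id"
      show "G (F h) = h"
      proof (rule extensionalityI[where A = ?Q])
        show "G (F h) \<in> extensional ?Q" by (simp add: G_def)
        show "h \<in> extensional ?Q" using h unfolding alg_hom_quot_def by (auto simp: PiE_def)
        fix X assume "X \<in> ?Q" then show "G (F h) X = h X" using sing[OF h] Gv by simp
      qed
    qed
    show "\<forall>k\<in>alg_hom_B A n Tc. F (G k) = k"
    proof
      fix k assume k: "k \<in> alg_hom_B A n Tc"
      show "F (G k) = k"
      proof (rule extensionalityI[where A = ?Q])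
        show "F (G k) \<in> extensional ?Q" by (simp add: F_def)
        show "k \<in> extensional ?Q" using k unfolding alg_hom_B_def by (auto simp: PiE_def)
        fix X assume "X \<in> ?Q" then show "F (G k) X = k X" using Fv Gv by simp
      qed
    qed
    show "F ` alg_hom_quot A n Tc Id \<subseteq> alg_hom_B A n Tc"
    proof
      fix k assume "k \<in> F ` alg_hom_quot A n Tc Id"
      then obtain h where h: "h \<in> alg_hom_quot A n Tc Id" and kh: "k = F h" by auto
      note hp = h[unfolded alg_hom_quot_def, simplified]
      have c0: "Tc `` {0} \<in> ?Q" and c1: "Tc `` {1} \<in> ?Q"
        using zero_in[OF A] one_in[OF A] by (auto intro: quotientI)
      show "k \<in> alg_hom_B A n Tc"
        unfolding alg_hom_B_def
      proof (intro CollectI conjI ballI)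
        show "k \<in> ?Q \<rightarrow>\<^sub>E UNIV" by (simp add: kh F_def)
        show "k (Tc `` {0}) = 0" using kh Fv[OF c0] hp by simp
        show "k (Tc `` {1}) = 1" using kh Fv[OF c1] hp by simp
      next
        fix X Y assume X: "X \<in> ?Q" and Y: "Y \<in> ?Q"
        show "k (qadd Tc X Y) = k X + k Y"
          using kh Fv[OF qclosed(1)[OF A Tcc X Y]] hp X Y sing[OF h X] sing[OF h Y] by simp
        show "k (qmul Tc X Y) = k X * k Y"
          using kh Fv[OF qclosed(2)[OF A Tcc X Y]] hp X Y sing[OF h X] sing[OF h Y] by simp
      next
        fix a X assume a: "a \<in> A" and X: "X \<in> ?Q"
        show "k (qsmul Tc (const_poly a) X) = a * k X"
          using kh Fv[OF qsclosed[OF A Tcc a X]] hp a X sing[OF h X] by simp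
      qed
    qed
    show "G ` alg_hom_B A n Tc \<subseteq> alg_hom_quot A n Tc Id"
    proof
      fix h assume "h \<in> G ` alg_hom_B A n Tc"
      then obtain k where k: "k \<in> alg_hom_B A n Tc" and hk: "h = G k" by auto
      note kp = k[unfolded alg_hom_B_def, simplified]
      have c0: "Tc `` {0} \<in> ?Q" and c1: "Tc `` {1} \<in> ?Q"
        using zero_in[OF A] one_in[OF A] by (auto intro: quotientI)
      show "h \<in> alg_hom_quot A n Tc Id"
        unfolding alg_hom_quot_def
      proof (intro CollectI conjI ballI)
        show "h \<in> ?Q \<rightarrow>\<^sub>E UNIV // Id" by (auto simp: hk G_def Id_quot)
        show "h (Tc `` {0}) = Id `` {0}" using hk Gv[OF c0] kp by simp
        show "h (Tc `` {1}) = Id `` {1}" using hk Gv[OF c1] kp by simp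
      next
        fix X Y assume X: "X \<in> ?Q" and Y: "Y \<in> ?Q"
        show "h (qadd Tc X Y) = qadd Id (h X) (h Y)"
          using hk Gv[OF qclosed(1)[OF A Tcc X Y]] kp X Y Gv[OF X] Gv[OF Y] by simp
        show "h (qmul Tc X Y) = qmul Id (h X) (h Y)"
          using hk Gv[OF qclosed(2)[OF A Tcc X Y]] kp X Y Gv[OF X] Gv[OF Y] by simp
      next
        fix a X assume a: "a \<in> A" and X: "X \<in> ?Q"
        show "h (qsmul Tc (const_poly a) X) = qsmul Id a (h X)"
          using hk Gv[OF qsclosed[OF A Tcc a X]] kp a X Gv[OF X] by simp
      qed
    qed
  qed
qed



theorem theorem3p12:
  fixes A :: "'b::comm_semiring_1 set" and n :: nat
    and \<rho> :: "('b \<times> 'b) set" and T :: "('b mpoly \<times> 'b mpoly) set"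
  assumes "(0::'b) \<noteq> 1"
    and "subsemiring A"
    and "is_congruence UNIV \<rho>"
    and "T \<subseteq> poly_carrier A n \<times> poly_carrier A n"
    and "T \<noteq> {}"
  shows "(\<exists>\<phi>. bij_betw \<phi> (pts_mod (zero_set n \<rho> T) \<rho>)
                     (alg_hom_quot A n (gen_congruence (poly_carrier A n) T) \<rho>))
       \<and> card (pts_mod (zero_set n \<rho> T) \<rho>)
           = card (alg_hom_quot A n (gen_congruence (poly_carrier A n) T) \<rho>)
       \<and> (\<exists>\<psi>. bij_betw \<psi> (zero_set n Id T)
                     (alg_hom_B A n (gen_congruence (poly_carrier A n) T)))
       \<and> card (zero_set n Id T) = card (alg_hom_B A n (gen_congruence (poly_carrier A n) T))"
proof -
  note A = assms(2) and rho = assms(3) and T = assms(4)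
  let ?Tc = "gen_congruence (poly_carrier A n) T"
  obtain \<phi> where phi: "bij_betw \<phi> (pts_mod (zero_set n \<rho> T) \<rho>) (alg_hom_quot A n ?Tc \<rho>)"
    using part1[OF A rho T] by blast
  obtain \<phi>' where phi': "bij_betw \<phi>' (pts_mod (zero_set n Id T) Id) (alg_hom_quot A n ?Tc Id)"
    using part1[OF A Id_cong T] by blast
  have Tcc: "is_congruence (poly_carrier A n) ?Tc"
    using gen_cong[OF carrier_cong[OF A] T] .
  obtain F where F: "bij_betw F (alg_hom_quot A n ?Tc Id) (alg_hom_B A n ?Tc)"
    using hom_bij[OF A Tcc] by blast
  have m: "bij_betw (\<lambda>P. map (\<lambda>c. Id `` {c}) P) (zero_set n Id T) (pts_mod (zero_set n Id T) Id)"
    unfolding bij_betw_def pts_mod_def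
  proof
    show "inj_on (map (\<lambda>c. Id `` {c})) (zero_set n Id T)"
    proof (rule inj_onI)
      fix x y :: "'b list" assume "map (\<lambda>c. Id `` {c}) x = map (\<lambda>c. Id `` {c}) y"
      then have "map (\<lambda>c. {c}) x = map (\<lambda>c. {c}) y" by simp
      moreover have "inj (\<lambda>c::'b. {c})" by (simp add: inj_def)
      ultimately show "x = y" by (simp add: inj_map_eq_map)
    qed
  qed simp
  have psi: "bij_betw (F \<circ> (\<phi>' \<circ> (\<lambda>P. map (\<lambda>c. Id `` {c}) P))) (zero_set n Id T) (alg_hom_B A n ?Tc)"
    by (rule bij_betw_trans[OF bij_betw_trans[OF m phi'] F])
  have c1: "card (pts_mod (zero_set n \<rho> T) \<rho>) = card (alg_hom_quot A n ?Tc \<rho>)"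
    by (rule bij_betw_same_card[OF phi])
  have c2: "card (zero_set n Id T) = card (alg_hom_B A n ?Tc)"
    by (rule bij_betw_same_card[OF psi])
  show ?thesis using phi psi c1 c2 by blast
qed


end
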